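(* For every $n\ge 2$, there exists no matching mechanism that is resolute, symmetric (i.e. $G^*$-symmetric) and minimally optimal.
   Context: Fix $n\ge 2$, $W=\{1,\dots,n\}$ (women), $M=\{n+1,\dots,2n\}$ (men), $I=W\cup M$. Permutations compose right-to-left. A preference profile is a function $p$ on $I$ assigning to each $x\in W$ a linear order $p(x)$ on $M$ and to each $y\in M$ a linear order $p(y)$ on $W$; $\mathcal{P}$ is the set of preference profiles. For a linear order $R$ on a set $X$ and $a\in X$, $\mathrm{Rank}_R(a)=|\{b\in X: b\succeq_R a\}|$. A matching is a permutation $\mu$ of $I$ with $\mu(W)=M$, $\mu(M)=W$ and $\mu(\mu(z))=z$ for all $z\in I$; $\mathcal{M}$ is the set of matchings. $\mu$ is minimally optimal for $p$ if there is $z\in I$ with $\mathrm{Rank}_{p(z)}(\mu(z))<n$. Let $G^*=\{\varphi\in\mathrm{Sym}(I):\{\varphi(W),\varphi(M)\}=\{W,M\}\}$. For a linear order $R$ on $X\subseteq I$ and $\varphi\in\mathrm{Sym}(I)$, $\varphi R$ is the relation on $\varphi(X)$ with $(a,b)\in\varphi R$ iff $(\varphi^{-1}(a),\varphi^{-1}(b))\in R$. For $p\in\mathcal{P}$, $\varphi\in G^*$, $p^\varphi(z)=\varphi\,p(\varphi^{-1}(z))$. For a permutation $\mu$, $\mu^\varphi=\varphi\mu\varphi^{-1}$; $S^\varphi=\{\mu^\varphi:\mu\in S\}$. A matching mechanism is a correspondence $F$ from $\mathcal{P}$ to $\mathcal{M}$; it is resolute if $|F(p)|=1$ for all $p$;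 minimally optimal if every $\mu\in F(p)$ is minimally optimal for $p$, for all $p$; symmetric if $F(p^\varphi)=F(p)^\varphi$ for all $p\in\mathcal{P}$, $\varphi\in G^*$. *)

theory Defs
  imports "HOL-Combinatorics.Permutations"
begin

text \<open>A linear order R on X is a relation with (a,b) \<in> R meaning a is weakly preferred to b.\<close>

definition Wom :: "nat \<Rightarrow> nat set" where "Wom n = {1..n}"
definition Men :: "nat \<Rightarrow> nat set" where "Men n = {n+1..2*n}"
definition Ag :: "nat \<Rightarrow> nat set" where "Ag n = Wom n \<union> Men n"

definition Rank :: "nat set \<Rightarrow> (nat \<times> nat) set \<Rightarrow> nat \<Rightarrow> nat" where
  "Rank X R a = card {b \<in> X. (b, a) \<in> R}"

definition profiles :: "nat \<Rightarrow> (nat \<Rightarrow> (nat \<times> nat) set) set" where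
  "profiles n = {p. (\<forall>x\<in>Wom n. linear_order_on (Men n) (p x))
                  \<and> (\<forall>y\<in>Men n. linear_order_on (Wom n) (p y))
                  \<and> (\<forall>z. z \<notin> Ag n \<longrightarrow> p z = {})}"

definition matchings :: "nat \<Rightarrow> (nat \<Rightarrow> nat) set" where
  "matchings n = {\<mu>. \<mu> permutes Ag n \<and> \<mu> ` Wom n = Men n \<and> \<mu> ` Men n = Wom n
                     \<and> (\<forall>z\<in>Ag n. \<mu> (\<mu> z) = z)}"

definition opp :: "nat \<Rightarrow> nat \<Rightarrow> nat set" where
  "opp n z = (if z \<in> Wom n then Men n else Wom n)"

definition min_optimal :: "nat \<Rightarrow> (nat \<Rightarrow> (nat \<times> nat) set) \<Rightarrow> (nat \<Rightarrow> nat) \<Rightarrow> bool" where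
  "min_optimal n p \<mu> \<longleftrightarrow> (\<exists>z\<in>Ag n. Rank (opp n z) (p z) (\<mu> z) < n)"

definition Gstar :: "nat \<Rightarrow> (nat \<Rightarrow> nat) set" where
  "Gstar n = {\<phi>. \<phi> permutes Ag n \<and> {\<phi> ` Wom n, \<phi> ` Men n} = {Wom n, Men n}}"

definition rel_act :: "(nat \<Rightarrow> nat) \<Rightarrow> (nat \<times> nat) set \<Rightarrow> (nat \<times> nat) set" where
  "rel_act \<phi> R = {(\<phi> a, \<phi> b) | a b. (a, b) \<in> R}"

definition prof_act :: "(nat \<Rightarrow> (nat \<times> nat) set) \<Rightarrow> (nat \<Rightarrow> nat) \<Rightarrow> (nat \<Rightarrow> (nat \<times> nat) set)" where
  "prof_act p \<phi> = (\<lambda>z. rel_act \<phi> (p (inv \<phi> z)))"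

definition perm_act :: "(nat \<Rightarrow> nat) \<Rightarrow> (nat \<Rightarrow> nat) \<Rightarrow> (nat \<Rightarrow> nat)" where
  "perm_act \<mu> \<phi> = \<phi> \<circ> \<mu> \<circ> inv \<phi>"

definition mechanism :: "nat \<Rightarrow> ((nat \<Rightarrow> (nat \<times> nat) set) \<Rightarrow> (nat \<Rightarrow> nat) set) \<Rightarrow> bool" where
  "mechanism n F \<longleftrightarrow> (\<forall>p\<in>profiles n. F p \<subseteq> matchings n)"

definition resolute :: "nat \<Rightarrow> ((nat \<Rightarrow> (nat \<times> nat) set) \<Rightarrow> (nat \<Rightarrow> nat) set) \<Rightarrow> bool" where
  "resolute n F \<longleftrightarrow> (\<forall>p\<in>profiles n. card (F p) = 1)"

definition mech_min_optimal :: "nat \<Rightarrow> ((nat \<Rightarrow> (nat \<times> nat) set) \<Rightarrow> (nat \<Rightarrow> nat) set) \<Rightarrow> bool" where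
  "mech_min_optimal n F \<longleftrightarrow> (\<forall>p\<in>profiles n. \<forall>\<mu>\<in>F p. min_optimal n p \<mu>)"

definition symmetric :: "nat \<Rightarrow> ((nat \<Rightarrow> (nat \<times> nat) set) \<Rightarrow> (nat \<Rightarrow> nat) set) \<Rightarrow> bool" where
  "symmetric n F \<longleftrightarrow> (\<forall>p\<in>profiles n. \<forall>\<phi>\<in>Gstar n.
       F (prof_act p \<phi>) = (\<lambda>\<mu>. perm_act \<mu> \<phi>) ` F p)"

end

theory Submission
  imports Defs
begin

definition posn :: "nat \<Rightarrow> nat \<Rightarrow> nat" where
  "posn n z = (if z \<le> n then 2*z - 2 else 2*(z-n) - 1)"
definition cyc :: "nat \<Rightarrow> nat \<Rightarrow> nat" where
  "cyc n z = (if 1 \<le> z \<and> z \<le> n then z + n else if n < z \<and> z < 2*n then z - n + 1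
              else if z = 2*n then 1 else z)"
definition agt :: "nat \<Rightarrow> nat \<Rightarrow> nat" where
  "agt n k = (if even k then k div 2 + 1 else n + (k+1) div 2)"
definition key :: "nat \<Rightarrow> nat \<Rightarrow> nat \<Rightarrow> int" where
  "key n z a = (int (posn n a) - int (posn n z) + int n) mod (2 * int n)"
definition prof0 :: "nat \<Rightarrow> nat \<Rightarrow> (nat \<times> nat) set" where
  "prof0 n z = (if z \<in> Ag n then {(a,b). a \<in> opp n z \<and> b \<in> opp n z \<and> key n z b \<le> key n z a} else {})"

lemma suc_mod_eq: "(a::nat) < m \<Longrightarrow> (a+1) mod m = (if a+1 = m then 0 else a+1)"
  by auto

lemma suc_mod_inj: "(a::nat) < m \<Longrightarrow> b < m \<Longrightarrow> (a+1) mod m = (b+1) mod m \<Longrightarrow> a = b"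
  using suc_mod_eq[of a m] suc_mod_eq[of b m] by (auto split: if_splits)

context fixes n :: nat assumes n2: "n \<ge> 2"
begin

lemma posn_lt: "z \<in> Ag n \<Longrightarrow> posn n z < 2*n"
  using n2 by (auto simp: posn_def Ag_def Wom_def Men_def)

lemma posn_inj: "z \<in> Ag n \<Longrightarrow> y \<in> Ag n \<Longrightarrow> posn n z = posn n y \<Longrightarrow> z = y"
proof -
  assume z: "z \<in> Ag n" and y: "y \<in> Ag n" and e: "posn n z = posn n y"
  have z1: "1 \<le> z" "z \<le> 2*n" and y1: "1 \<le> y" "y \<le> 2*n" using z y by (auto simp: Ag_def Wom_def Men_def)
  show "z = y"
  proof (cases "z \<le> n"; cases "y \<le> n")
    assume "z \<le> n" "y \<le> n" then show ?thesis using e z1 y1 by (simp add: posn_def)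
  next
    assume a: "z \<le> n" "\<not> y \<le> n"
    then have "2*z - 2 = 2*(y-n) - 1" using e by (simp add: posn_def)
    then show ?thesis using a z1 y1 by presburger
  next
    assume a: "\<not> z \<le> n" "y \<le> n"
    then have "2*y - 2 = 2*(z-n) - 1" using e by (simp add: posn_def)
    then show ?thesis using a z1 y1 by presburger
  next
    assume "\<not> z \<le> n" "\<not> y \<le> n" then show ?thesis using e z1 y1 by (simp add: posn_def)
  qed
qed

lemma cyc_Ag: "z \<in> Ag n \<Longrightarrow> cyc n z \<in> Ag n"
  using n2 by (auto simp: cyc_def Ag_def Wom_def Men_def)

lemma posn_cyc: "z \<in> Ag n \<Longrightarrow> posn n (cyc n z) = (posn n z + 1) mod (2*n)"
proof -
  assume z: "z \<in> Ag n"
  have "1 \<le> z \<and> z \<le> n \<or> n < z \<and> z < 2*n \<or> z = 2*n"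
    using z by (auto simp: Ag_def Wom_def Men_def)
  then consider "1 \<le> z \<and> z \<le> n" | "n < z \<and> z < 2*n" | "z = 2*n" by blast
  then show ?thesis
  proof cases
    case 1 then show ?thesis using n2 by (simp add: cyc_def posn_def; subst mod_less; linarith)
  next
    case 2 then show ?thesis using n2 by (simp add: cyc_def posn_def; subst mod_less; linarith)
  next
    case 3 then show ?thesis using n2 by (simp add: cyc_def posn_def)
  qed
qed

lemma cyc_out: "z \<notin> Ag n \<Longrightarrow> cyc n z = z"
  using n2 by (auto simp: cyc_def Ag_def Wom_def Men_def)

lemma cyc_inj: "inj_on (cyc n) (Ag n)"
proof (rule inj_onI)
  fix x y assume x: "x \<in> Ag n" and y: "y \<in> Ag n" and e: "cyc n x = cyc n y"
  have "(posn n x + 1) mod (2*n) = (posn n y + 1) mod (2*n)" using posn_cyc[OF x] posn_cyc[OF y] e by simp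
  moreover have "posn n x < 2*n" "posn n y < 2*n" using posn_lt x y by auto
  ultimately have "posn n x = posn n y"
    using suc_mod_inj by blast
  then show "x = y" using posn_inj x y by blast
qed

lemma cyc_surj: "cyc n ` Ag n = Ag n"
proof
  show "cyc n ` Ag n \<subseteq> Ag n" using cyc_Ag by blast
  show "Ag n \<subseteq> cyc n ` Ag n"
  proof
    fix y assume y: "y \<in> Ag n"
    then have "1 \<le> y \<and> y \<le> n \<or> n < y \<and> y \<le> 2*n" by (auto simp: Ag_def Wom_def Men_def)
    then consider "y = 1" | "2 \<le> y \<and> y \<le> n" | "n < y \<and> y \<le> 2*n" by linarith
    then show "y \<in> cyc n ` Ag n"
    proof cases
      case 1
      have "cyc n (2*n) = 1" "2*n \<in> Ag n" using n2 by (auto simp: cyc_def Ag_def Men_def)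
      then show ?thesis using 1 by (metis image_eqI)
    next
      case 2
      have "cyc n (y - 1 + n) = y" "y - 1 + n \<in> Ag n" using n2 2 by (auto simp: cyc_def Ag_def Men_def)
      then show ?thesis by (metis image_eqI)
    next
      case 3
      have "cyc n (y - n) = y" "y - n \<in> Ag n" using n2 3 by (auto simp: cyc_def Ag_def Wom_def)
      then show ?thesis by (metis image_eqI)
    qed
  qed
qed

lemma cyc_permutes: "cyc n permutes Ag n"
  by (rule bij_imp_permutes) (auto simp: bij_betw_def cyc_inj cyc_surj cyc_out)

lemma cyc_W: "a \<in> Ag n \<Longrightarrow> cyc n a \<in> Wom n \<longleftrightarrow> a \<in> Men n"
  using n2 by (auto simp: cyc_def Ag_def Wom_def Men_def)

lemma cyc_M: "a \<in> Ag n \<Longrightarrow> cyc n a \<in> Men n \<longleftrightarrow> a \<in> Wom n"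
  using n2 by (auto simp: cyc_def Ag_def Wom_def Men_def)

lemma cyc_img: "cyc n ` Wom n = Men n" "cyc n ` Men n = Wom n"
proof -
  have A: "Ag n = Wom n \<union> Men n" by (simp add: Ag_def)
  have d: "Wom n \<inter> Men n = {}" by (auto simp: Wom_def Men_def)
  show "cyc n ` Wom n = Men n"
  proof
    show "cyc n ` Wom n \<subseteq> Men n" using cyc_M A by auto
    show "Men n \<subseteq> cyc n ` Wom n"
    proof
      fix y assume "y \<in> Men n"
      then obtain x where "x \<in> Ag n" "cyc n x = y" using cyc_surj A by (metis UnI2 imageE)
      then show "y \<in> cyc n ` Wom n" using cyc_M \<open>y \<in> Men n\<close> by blast
    qed
  qed
  show "cyc n ` Men n = Wom n"
  proof
    show "cyc n ` Men n \<subseteq> Wom n" using cyc_W A by auto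
    show "Wom n \<subseteq> cyc n ` Men n"
    proof
      fix y assume "y \<in> Wom n"
      then obtain x where "x \<in> Ag n" "cyc n x = y" using cyc_surj A by (metis UnI1 imageE)
      then show "y \<in> cyc n ` Men n" using cyc_W \<open>y \<in> Wom n\<close> by blast
    qed
  qed
qed

lemma cyc_Gstar: "cyc n \<in> Gstar n"
  using cyc_permutes cyc_img by (auto simp: Gstar_def)

lemma key_cyc: "a \<in> Ag n \<Longrightarrow> y \<in> Ag n \<Longrightarrow> key n (cyc n y) (cyc n a) = key n y a"
proof -
  assume a: "a \<in> Ag n" and y: "y \<in> Ag n"
  have "int (posn n (cyc n a)) = (int (posn n a) + 1) mod (2 * int n)"
    using posn_cyc[OF a] by (simp add: zmod_int ac_simps)
  moreover have "int (posn n (cyc n y)) = (int (posn n y) + 1) mod (2 * int n)"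
    using posn_cyc[OF y] by (simp add: zmod_int ac_simps)
  moreover have "\<And>x y c m. ((x+1) mod m - (y+1) mod m + c) mod m = ((x::int) - y + c) mod m"
  proof -
    fix x y c m :: int
    have "((x+1) mod m - (y+1) mod m + c) mod m = (((x+1) mod m - (y+1) mod m) mod m + c) mod m"
      by (simp only: mod_add_left_eq)
    also have "\<dots> = (((x+1) - (y+1)) mod m + c) mod m" by (simp only: mod_diff_eq)
    also have "\<dots> = ((x+1) - (y+1) + c) mod m" by (simp only: mod_add_left_eq)
    finally have "((x+1) mod m - (y+1) mod m + c) mod m = ((x+1) - (y+1) + c) mod m" .
    then show "((x+1) mod m - (y+1) mod m + c) mod m = (x - y + c) mod m" by simp
  qed
  ultimately show ?thesis unfolding key_def by simp
qed

lemma agt_props: "k < 2*n \<Longrightarrow> agt n k \<in> Ag n \<and> posn n (agt n k) = k"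
  using n2 by (auto simp: agt_def Ag_def Wom_def Men_def posn_def; presburger)

lemma agt_0: "agt n 0 = 1" by (simp add: agt_def)

lemma agt_Suc: "Suc k < 2*n \<Longrightarrow> cyc n (agt n k) = agt n (Suc k)"
proof -
  assume k: "Suc k < 2*n"
  have a: "agt n k \<in> Ag n" "posn n (agt n k) = k" using agt_props k by auto
  have b: "agt n (Suc k) \<in> Ag n" "posn n (agt n (Suc k)) = Suc k" using agt_props k by auto
  have "posn n (cyc n (agt n k)) = Suc k" using posn_cyc[OF a(1)] a(2) k by simp
  then show ?thesis using posn_inj cyc_Ag[OF a(1)] b by metis
qed

lemma agt_posn: "z \<in> Ag n \<Longrightarrow> agt n (posn n z) = z"
  using agt_props posn_lt posn_inj by metis


lemma opp_Ag: "z \<in> Ag n \<Longrightarrow> opp n z \<subseteq> Ag n"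
  by (auto simp: opp_def Ag_def)

lemma WM_disj: "x \<in> Wom n \<Longrightarrow> x \<notin> Men n"
  by (auto simp: Wom_def Men_def)

lemma card_opp: "card (opp n z) = n"
  by (simp add: opp_def Wom_def Men_def)

lemma key_inj: "z \<in> Ag n \<Longrightarrow> inj_on (key n z) (Ag n)"
proof (rule inj_onI)
  fix a b assume z: "z \<in> Ag n" and a: "a \<in> Ag n" and b: "b \<in> Ag n" and e: "key n z a = key n z b"
  let ?m = "2 * int n"
  have "?m dvd (int (posn n a) - int (posn n z) + int n) - (int (posn n b) - int (posn n z) + int n)"
    using e unfolding key_def by (simp only: mod_eq_dvd_iff)
  then have "?m dvd int (posn n a) - int (posn n b)" by simp
  then have "int (posn n a) mod ?m = int (posn n b) mod ?m" by (simp only: mod_eq_dvd_iff)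
  moreover have "int (posn n a) < ?m" using posn_lt[OF a] by simp
  moreover have "int (posn n b) < ?m" using posn_lt[OF b] by simp
  ultimately have "int (posn n a) = int (posn n b)" by simp
  then show "a = b" using posn_inj a b by simp
qed

lemma lin_key: "inj_on (f :: nat \<Rightarrow> int) X \<Longrightarrow> linear_order_on X {(a,b). a \<in> X \<and> b \<in> X \<and> f b \<le> f a}"
  unfolding linear_order_on_def partial_order_on_def preorder_on_def refl_on_def trans_on_def
    antisym_on_def total_on_def
  by (auto dest: inj_onD)

lemma prof0_lin: "z \<in> Ag n \<Longrightarrow> linear_order_on (opp n z) (prof0 n z)"
proof -
  assume z: "z \<in> Ag n"
  have "inj_on (key n z) (opp n z)" using key_inj[OF z] opp_Ag[OF z] inj_on_subset by blast
  then show ?thesis using z lin_key unfolding prof0_def by simp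
qed

lemma prof0_profiles: "prof0 n \<in> profiles n"
proof -
  have "\<forall>x\<in>Wom n. linear_order_on (Men n) (prof0 n x)"
  proof
    fix x assume "x \<in> Wom n"
    moreover then have "opp n x = Men n" by (simp add: opp_def)
    ultimately show "linear_order_on (Men n) (prof0 n x)" using prof0_lin by (metis Ag_def UnI1)
  qed
  moreover have "\<forall>x\<in>Men n. linear_order_on (Wom n) (prof0 n x)"
  proof
    fix x assume "x \<in> Men n"
    moreover then have "opp n x = Wom n" using WM_disj by (auto simp add: opp_def)
    ultimately show "linear_order_on (Wom n) (prof0 n x)" using prof0_lin by (metis Ag_def UnI2)
  qed
  ultimately show ?thesis unfolding profiles_def by (auto simp: prof0_def)
qed

lemma opp_cyc: "a \<in> Ag n \<Longrightarrow> y \<in> Ag n \<Longrightarrow> cyc n a \<in> opp n (cyc n y) \<longleftrightarrow> a \<in> opp n y"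
proof -
  assume a: "a \<in> Ag n" and y: "y \<in> Ag n"
  have a': "a \<in> Wom n \<or> a \<in> Men n" and y': "y \<in> Wom n \<or> y \<in> Men n" using a y by (auto simp: Ag_def)
  show ?thesis
    using a' y' cyc_W[OF a] cyc_M[OF a] cyc_W[OF y] cyc_M[OF y] WM_disj[of a] WM_disj[of y]
      WM_disj[of "cyc n a"] WM_disj[of "cyc n y"]
    unfolding opp_def by (smt (verit))
qed

lemma rel_act_prof0: "y \<in> Ag n \<Longrightarrow> rel_act (cyc n) (prof0 n y) = prof0 n (cyc n y)"
proof
  assume y: "y \<in> Ag n"
  have cy: "cyc n y \<in> Ag n" using cyc_Ag y by blast
  show "rel_act (cyc n) (prof0 n y) \<subseteq> prof0 n (cyc n y)"
  proof
    fix q assume "q \<in> rel_act (cyc n) (prof0 n y)"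
    then obtain a b where q: "q = (cyc n a, cyc n b)" and ab: "(a,b) \<in> prof0 n y"
      unfolding rel_act_def by blast
    have a: "a \<in> opp n y" and b: "b \<in> opp n y" and k: "key n y b \<le> key n y a"
      using ab y unfolding prof0_def by auto
    have aA: "a \<in> Ag n" and bA: "b \<in> Ag n" using a b opp_Ag y by auto
    show "q \<in> prof0 n (cyc n y)"
      using q a b k aA bA y cy opp_cyc key_cyc unfolding prof0_def by auto
  qed
  show "prof0 n (cyc n y) \<subseteq> rel_act (cyc n) (prof0 n y)"
  proof
    fix q assume q: "q \<in> prof0 n (cyc n y)"
    then obtain a' b' where q': "q = (a', b')" and a': "a' \<in> opp n (cyc n y)"
        and b': "b' \<in> opp n (cyc n y)" and k: "key n (cyc n y) b' \<le> key n (cyc n y) a'"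
      using cy unfolding prof0_def by auto
    have a'A: "a' \<in> Ag n" and b'A: "b' \<in> Ag n" using a' b' opp_Ag cy by auto
    obtain a where aA: "a \<in> Ag n" and ae: "cyc n a = a'" using a'A cyc_surj by (metis imageE)
    obtain b where bA: "b \<in> Ag n" and be: "cyc n b = b'" using b'A cyc_surj by (metis imageE)
    have "(a, b) \<in> prof0 n y"
      using a' b' k aA bA y ae be opp_cyc key_cyc unfolding prof0_def by auto
    then show "q \<in> rel_act (cyc n) (prof0 n y)" using q' ae be unfolding rel_act_def by blast
  qed
qed

lemma prof0_inv: "prof_act (prof0 n) (cyc n) = prof0 n"
proof
  fix z
  have ip: "inv (cyc n) permutes Ag n" using cyc_permutes permutes_inv by blast
  show "prof_act (prof0 n) (cyc n) z = prof0 n z"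
  proof (cases "z \<in> Ag n")
    case True
    let ?y = "inv (cyc n) z"
    have y: "?y \<in> Ag n" using permutes_in_image[OF ip] True by simp
    have "cyc n ?y = z" using permutes_inverses(1)[OF cyc_permutes] by simp
    then show ?thesis using rel_act_prof0[OF y] unfolding prof_act_def by simp
  next
    case False
    then have "inv (cyc n) z = z" using permutes_not_in[OF ip] by simp
    then show ?thesis using False unfolding prof_act_def prof0_def rel_act_def by simp
  qed
qed

lemma mod_twice: "0 \<le> (D::int) \<Longrightarrow> D < 2 * int n \<Longrightarrow> (2*D) mod (2 * int n) = 0 \<Longrightarrow> D = 0 \<or> D = int n"
proof (cases "2*D < 2 * int n")
  case True
  assume "0 \<le> D" "(2*D) mod (2 * int n) = 0"
  then show ?thesis using True by (simp add: mod_pos_pos_trivial)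
next
  case False
  assume h: "0 \<le> D" "D < 2 * int n" "(2*D) mod (2 * int n) = 0"
  have "(2*D) mod (2 * int n) = ((2*D - 2 * int n) + 2 * int n) mod (2 * int n)" by simp
  also have "\<dots> = (2*D - 2 * int n) mod (2 * int n)" by (simp only: mod_add_self2)
  also have "\<dots> = 2*D - 2 * int n" using False h by (intro mod_pos_pos_trivial) auto
  finally show ?thesis using h by simp
qed

theorem main: "\<not> (\<exists>F. mechanism n F \<and> resolute n F \<and> symmetric n F \<and> mech_min_optimal n F)"
proof
  assume "\<exists>F. mechanism n F \<and> resolute n F \<and> symmetric n F \<and> mech_min_optimal n F"
  then obtain F where mech: "mechanism n F" and res: "resolute n F" and sym: "symmetric n F"
    and mo: "mech_min_optimal n F" by blast
  let ?p = "prof0 n"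
  let ?c = "cyc n"
  have pP: "?p \<in> profiles n" by (rule prof0_profiles)
  have "card (F ?p) = 1" using res pP unfolding resolute_def by blast
  then obtain \<mu> where Fp: "F ?p = {\<mu>}" by (rule card_1_singletonE)
  have mm: "\<mu> \<in> matchings n" using mech pP Fp unfolding mechanism_def by blast
  have mperm: "\<mu> permutes Ag n" and mW: "\<mu> ` Wom n = Men n" and mM: "\<mu> ` Men n = Wom n"
    and minv: "\<forall>z\<in>Ag n. \<mu> (\<mu> z) = z" using mm unfolding matchings_def by auto
  have "F (prof_act ?p ?c) = (\<lambda>\<mu>. perm_act \<mu> ?c) ` F ?p"
    using sym pP cyc_Gstar unfolding symmetric_def by blast
  then have "{\<mu>} = {perm_act \<mu> ?c}" using Fp prof0_inv by simp
  then have mu_eq: "\<mu> = ?c \<circ> \<mu> \<circ> inv ?c" unfolding perm_act_def by simp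
  have comm: "\<mu> (?c x) = ?c (\<mu> x)" for x
  proof -
    have "\<mu> (?c x) = ?c (\<mu> (inv ?c (?c x)))" using mu_eq by (metis comp_apply)
    also have "inv ?c (?c x) = x" using permutes_inverses(2)[OF cyc_permutes] by simp
    finally show ?thesis .
  qed
  have muAg: "\<mu> z \<in> Ag n" if "z \<in> Ag n" for z using permutes_in_image[OF mperm] that by simp
  define D where "D = int (posn n (\<mu> 1))"
  have oneAg: "1 \<in> Ag n" and oneW: "1 \<in> Wom n" using n2 by (auto simp: Ag_def Wom_def)
  have m: "2 * int n > 0" using n2 by simp
  have claim: "k < 2*n \<Longrightarrow> int (posn n (\<mu> (agt n k))) = (int k + D) mod (2 * int n)" for k
  proof (induction k)
    case 0
    have "int (posn n (\<mu> 1)) < 2 * int n" using posn_lt muAg oneAg by fastforce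
    then show ?case using agt_0 D_def by (simp add: mod_pos_pos_trivial)
  next
    case (Suc k)
    then have kl: "k < 2*n" by simp
    have w: "\<mu> (agt n k) \<in> Ag n" using muAg agt_props kl by blast
    have "int (posn n (\<mu> (agt n (Suc k)))) = int (posn n (?c (\<mu> (agt n k))))"
      using agt_Suc[OF Suc.prems] comm by metis
    also have "\<dots> = (int (posn n (\<mu> (agt n k))) + 1) mod (2 * int n)"
      using posn_cyc[OF w] by (simp add: zmod_int ac_simps)
    also have "\<dots> = ((int k + D) mod (2 * int n) + 1) mod (2 * int n)" using Suc.IH kl by simp
    also have "\<dots> = (int k + D + 1) mod (2 * int n)" by (simp only: mod_add_left_eq)
    finally show ?case by (simp add: ac_simps)
  qed
  have allz: "int (posn n (\<mu> z)) = (int (posn n z) + D) mod (2 * int n)" if "z \<in> Ag n" for z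
    using claim[of "posn n z"] posn_lt[OF that] agt_posn[OF that] by simp
  have m1: "\<mu> 1 \<in> Ag n" using muAg oneAg by blast
  have p1: "posn n 1 = 0" using n2 by (simp add: posn_def)
  have D1: "int (posn n (\<mu> 1)) = D" by (simp add: D_def)
  have e1: "int (posn n (\<mu> (\<mu> 1))) = (D + D) mod (2 * int n)" using allz[OF m1] D1 by simp
  have e2: "\<mu> (\<mu> 1) = 1" using minv oneAg by blast
  have e3: "(D + D) mod (2 * int n) = 0" using e1 e2 p1 by simp
  have e4: "(2*D) mod (2 * int n) = 0" using e3 by (simp only: mult_2)
  have e5: "0 \<le> D" using D1 by linarith
  have e6: "D < 2 * int n" using D1 posn_lt[OF m1] by linarith
  have "D = 0 \<or> D = int n" by (rule mod_twice[OF e5 e6 e4])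
  moreover have "D \<noteq> 0"
  proof
    assume "D = 0"
    then have "posn n (\<mu> 1) = posn n 1" using D_def p1 by simp
    then have "\<mu> 1 = 1" using posn_inj[OF m1 oneAg] by simp
    moreover have "\<mu> 1 \<in> Men n" using mW oneW by blast
    ultimately show False using WM_disj oneW by simp
  qed
  ultimately have Dn: "D = int n" by blast
  obtain z where z: "z \<in> Ag n" and rk: "Rank (opp n z) (?p z) (\<mu> z) < n"
    using mo pP Fp unfolding mech_min_optimal_def min_optimal_def by blast
  have mz_opp: "\<mu> z \<in> opp n z"
  proof (cases "z \<in> Wom n")
    case True then show ?thesis using mW by (auto simp: opp_def)
  next
    case False
    then have "z \<in> Men n" using z by (simp add: Ag_def)
    then show ?thesis using mM False by (auto simp: opp_def)
  qed
  have k0: "key n z (\<mu> z) = 0"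
  proof -
    let ?m = "2 * int n" and ?x = "int (posn n z)"
    have "key n z (\<mu> z) = ((?x + int n) mod ?m - ?x + int n) mod ?m"
      unfolding key_def using allz[OF z] Dn by simp
    also have "\<dots> = ((?x + int n) mod ?m + (int n - ?x)) mod ?m" by (simp add: algebra_simps)
    also have "\<dots> = ((?x + int n) + (int n - ?x)) mod ?m" by (simp only: mod_add_left_eq)
    also have "\<dots> = 0" by simp
    finally show ?thesis .
  qed
  have "{b \<in> opp n z. (b, \<mu> z) \<in> ?p z} = opp n z"
    using z mz_opp k0 m unfolding prof0_def by (auto simp: key_def)
  then have "Rank (opp n z) (?p z) (\<mu> z) = n" unfolding Rank_def using card_opp by simp
  then show False using rk by simp
qed

end

theorem theorem5:
  fixes n :: nat
  assumes "n \<ge> 2"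
  shows "\<not> (\<exists>F. mechanism n F \<and> resolute n F \<and> symmetric n F \<and> mech_min_optimal n F)"
  using main[OF assms] .

end
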